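(* Let $u:\mathbb{R}\times\mathbb{R}\to\mathbb{R}$ be a solution of the one-dimensional cubic nonlinear wave equation $$u_{tt}-u_{xx}+u^{3}=0,\qquad u(0,x)=u_0(x),\quad u_t(0,x)=u_1(x),$$ where $u_0\in C^1(\mathbb{R})$ with $u_0$ and $\partial_x u_0$ bounded on $\mathbb{R}$, and $u_1\in C^0(\mathbb{R})$ is bounded on $\mathbb{R}$. Then there is a constant $C$ (depending on $\|u_0\|_{L^\infty}$, $\|\partial_x u_0\|_{L^\infty}$, $\|u_1\|_{L^\infty}$) such that for all $t\ge 1$ and all $x\in\mathbb{R}$, $$|u(t,x)|\le C\,t^{1/3}.$$
   Context: The equation is the defocusing cubic wave equation on the real line with real-valued data that are uniformly $C^1\times C^0$, i.e. $\|u_0\|_{L^\infty}+\|\partial_x u_0\|_{L^\infty}+\|u_1\|_{L^\infty}<\infty$. *)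

theory Defs
  imports "HOL-Analysis.Analysis"
begin

text \<open>Mild (Duhamel / d'Alembert integral) solution on the whole line R x R of
  u_tt - u_xx + u^3 = 0, u(0) = u0, u_t(0) = u1.\<close>

definition cubic_wave_mild_solution ::
  "(real \<Rightarrow> real) \<Rightarrow> (real \<Rightarrow> real) \<Rightarrow> (real \<Rightarrow> real \<Rightarrow> real) \<Rightarrow> bool" where
  "cubic_wave_mild_solution u0 u1 u \<longleftrightarrow>
     continuous_on UNIV (\<lambda>(t, x). u t x) \<and>
     (\<forall>t x. t \<ge> 0 \<longrightarrow>
        u t x = (u0 (x + t) + u0 (x - t)) / 2
                + integral {x - t .. x + t} u1 / 2
                - integral {0 .. t} (\<lambda>s. integral {x - (t - s) .. x + (t - s)} (\<lambda>y. (u s y) ^ 3)) / 2) \<and>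
     (\<forall>t x. t \<le> 0 \<longrightarrow>
        u t x = (u0 (x + t) + u0 (x - t)) / 2
                - integral {x + t .. x - t} u1 / 2
                - integral {t .. 0} (\<lambda>s. integral {x - (s - t) .. x + (s - t)} (\<lambda>y. (u s y) ^ 3)) / 2)"

end

theory Submission
  imports Defs
begin


definition sint :: "real \<Rightarrow> real \<Rightarrow> (real \<Rightarrow> real) \<Rightarrow> real" where
  "sint a b f = (if a \<le> b then integral {a..b} f else - integral {b..a} f)"

lemma sint_eq: "a \<le> b \<Longrightarrow> sint a b f = integral {a..b} f"
  by (simp add: sint_def)

lemma sint_same[simp]: "sint a a f = 0"
  by (simp add: sint_def)

lemma sint_base:
  fixes f :: "real \<Rightarrow> real"
  assumes f: "continuous_on UNIV f" and m: "m \<le> a" "m \<le> w"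
  shows "sint a w f = integral {m..w} f - integral {m..a} f"
proof (cases "a \<le> w")
  case True
  have "integral {m..a} f + integral {a..w} f = integral {m..w} f"
    by (rule Henstock_Kurzweil_Integration.integral_combine) (use True m in \<open>auto intro!: integrable_continuous_real continuous_on_subset[OF f]\<close>)
  then show ?thesis using True by (simp add: sint_def)
next
  case False
  have "integral {m..w} f + integral {w..a} f = integral {m..a} f"
    by (rule Henstock_Kurzweil_Integration.integral_combine) (use False m in \<open>auto intro!: integrable_continuous_real continuous_on_subset[OF f]\<close>)
  then show ?thesis using False by (simp add: sint_def)
qed

lemma sint_add:
  fixes f :: "real \<Rightarrow> real"
  assumes f: "continuous_on UNIV f"
  shows "sint a b f + sint b c f = sint a c f"
proof -
  define m where "m = min a (min b c)"
  show ?thesis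
    using sint_base[OF f, of m a b] sint_base[OF f, of m b c] sint_base[OF f, of m a c]
    by (simp add: m_def)
qed

lemma sint_swap:
  shows "sint a b f = - sint b a f"
  by (auto simp: sint_def)

lemma sint_deriv:
  fixes f :: "real \<Rightarrow> real"
  assumes f: "continuous_on UNIV f"
  shows "((\<lambda>z. sint a z f) has_real_derivative f z) (at z)"
proof -
  define m where "m = min a z - 1"
  have d: "((\<lambda>w. integral {m..w} f) has_real_derivative f z) (at z within {m..z+1})"
    by (rule integral_has_real_derivative) (auto simp: m_def intro: continuous_on_subset[OF f])
  have "at z within {m..z+1} = at z"
    by (rule at_within_Icc_at) (auto simp: m_def)
  with d have d2: "((\<lambda>w. integral {m..w} f - integral {m..a} f) has_real_derivative f z) (at z)"
    by (auto intro!: derivative_eq_intros)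
  show ?thesis
  proof (rule has_field_derivative_transform_within_open[OF d2, of "{m<..}"])
    show "z \<in> {m<..}" by (simp add: m_def)
    show "\<And>w. w \<in> {m<..} \<Longrightarrow> integral {m..w} f - integral {m..a} f = sint a w f"
      using sint_base[OF f, of m] by (auto simp: m_def)
  qed auto
qed

lemma sint_bound:
  fixes f :: "real \<Rightarrow> real"
  assumes f: "continuous_on UNIV f" and b: "\<And>y. min a b \<le> y \<Longrightarrow> y \<le> max a b \<Longrightarrow> \<bar>f y\<bar> \<le> M"
  shows "\<bar>sint a b f\<bar> \<le> M * \<bar>b - a\<bar>"
proof (cases "a \<le> b")
  case True
  have "norm (integral {a..b} f) \<le> M * (b - a)"
    by (rule integral_bound) (use True b in \<open>auto intro: continuous_on_subset[OF f]\<close>)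
  then show ?thesis using True by (simp add: sint_def)
next
  case False
  have "norm (integral {b..a} f) \<le> M * (a - b)"
    by (rule integral_bound) (use False b in \<open>auto intro: continuous_on_subset[OF f]\<close>)
  then show ?thesis using False by (simp add: sint_def)
qed




lemma cont2_slice:
  fixes k :: "real \<Rightarrow> real \<Rightarrow> real"
  assumes k: "continuous_on UNIV (\<lambda>z. k (fst z) (snd z))"
  shows "continuous_on UNIV (k b)"
proof -
  have "continuous_on UNIV ((\<lambda>z. k (fst z) (snd z)) \<circ> (\<lambda>y. (b, y)))"
    by (rule continuous_on_compose[OF _ continuous_on_subset[OF k]]) (auto intro!: continuous_intros)
  then show ?thesis by (simp add: o_def)
qed

lemma sint_cont2:
  fixes k :: "real \<Rightarrow> real \<Rightarrow> real"
  assumes k: "continuous_on UNIV (\<lambda>z. k (fst z) (snd z))"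
  shows "continuous_on UNIV (\<lambda>z. sint c (fst z) (k (snd z)))"
proof -
  have kb: "continuous_on UNIV (k b)" for b by (rule cont2_slice[OF k])
  have kk: "continuous_on UNIV (\<lambda>(b, t). k b t)" using k by (simp add: case_prod_beta')
  have "isCont (\<lambda>z. sint c (fst z) (k (snd z))) z0" for z0
  proof -
    obtain a0 b0 where z0: "z0 = (a0, b0)" by fastforce
    have split: "sint c (fst z) (k (snd z)) = sint c a0 (k (snd z)) + sint a0 (fst z) (k (snd z))" for z
      using sint_add[OF kb] by metis
    have c1: "continuous_on UNIV (\<lambda>b. sint c a0 (k b))"
    proof (cases "c \<le> a0")
      case True
      have "continuous_on UNIV (\<lambda>b. integral (cbox c a0) (k b))"
        by (rule integral_continuous_on_param) (auto intro: continuous_on_subset[OF kk])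
      then show ?thesis using True by (simp add: sint_def)
    next
      case False
      have "continuous_on UNIV (\<lambda>b. integral (cbox a0 c) (k b))"
        by (rule integral_continuous_on_param) (auto intro: continuous_on_subset[OF kk])
      then show ?thesis using False by (simp add: sint_def continuous_on_minus)
    qed
    have t1: "((\<lambda>z. sint c a0 (k (snd z))) \<longlongrightarrow> sint c a0 (k b0)) (at z0)"
    proof -
      have "isCont (\<lambda>b. sint c a0 (k b)) b0"
        using c1 by (simp add: continuous_on_eq_continuous_at)
      then have "isCont ((\<lambda>b. sint c a0 (k b)) \<circ> snd) z0"
        by (intro continuous_intros) (simp add: z0)
      then show ?thesis by (simp add: isCont_def z0 o_def)
    qed
    define K where "K = cbox (b0 - 1, a0 - 1) (b0 + 1, a0 + 1 :: real)"
    obtain M where M: "\<And>w. w \<in> K \<Longrightarrow> norm (k (fst w) (snd w)) \<le> M"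
      using compact_imp_bounded[OF compact_continuous_image[OF continuous_on_subset[OF k subset_UNIV] compact_cbox], of "(b0 - 1, a0 - 1)" "(b0 + 1, a0 + 1)"]
      unfolding bounded_iff K_def by blast
    have t2: "((\<lambda>z. sint a0 (fst z) (k (snd z))) \<longlongrightarrow> 0) (at z0)"
    proof (rule Lim_null_comparison)
      show "\<forall>\<^sub>F z in at z0. norm (sint a0 (fst z) (k (snd z))) \<le> M * \<bar>fst z - a0\<bar>"
      proof -
        have "\<forall>\<^sub>F z in at z0. dist z z0 < 1"
          by (rule eventually_at_ball'[of 1, THEN eventually_mono]) (auto simp: dist_commute)
        then show ?thesis
        proof (rule eventually_mono)
          fix z :: "real \<times> real" assume "dist z z0 < 1"
          then have d1: "\<bar>fst z - a0\<bar> < 1" "\<bar>snd z - b0\<bar> < 1"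
            using dist_fst_le[of z z0] dist_snd_le[of z z0] by (auto simp: z0 dist_real_def)
          have "\<bar>sint a0 (fst z) (k (snd z))\<bar> \<le> M * \<bar>fst z - a0\<bar>"
          proof (rule sint_bound[OF kb])
            fix y assume "min a0 (fst z) \<le> y" "y \<le> max a0 (fst z)"
            then have "(snd z, y) \<in> K" using d1 by (auto simp: K_def cbox_Pair_iff)
            from M[OF this] show "\<bar>k (snd z) y\<bar> \<le> M" by simp
          qed
          then show "norm (sint a0 (fst z) (k (snd z))) \<le> M * \<bar>fst z - a0\<bar>" by simp
        qed
      qed
      have "((\<lambda>z. M * \<bar>fst z - a0\<bar>) \<longlongrightarrow> M * \<bar>fst z0 - a0\<bar>) (at z0)"
        by (intro tendsto_intros)
      then show "((\<lambda>z. M * \<bar>fst z - a0\<bar>) \<longlongrightarrow> 0) (at z0)" by (simp add: z0)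
    qed
    have "((\<lambda>z. sint c (fst z) (k (snd z))) \<longlongrightarrow> sint c a0 (k b0) + 0) (at z0)"
      unfolding split by (rule tendsto_add[OF t1 t2])
    then show ?thesis by (simp add: isCont_def z0)
  qed
  then show ?thesis by (simp add: continuous_on_eq_continuous_at)
qed




lemma sint_leibniz:
  fixes F F' :: "real \<Rightarrow> real \<Rightarrow> real"
  assumes F'c: "continuous_on UNIV (\<lambda>z. F' (fst z) (snd z))"
    and Fc: "continuous_on UNIV (\<lambda>z. F (fst z) (snd z))"
    and Fd: "\<And>x s. ((\<lambda>x. F x s) has_real_derivative F' x s) (at x)"
  shows "((\<lambda>y. sint c s (F y)) has_real_derivative sint c s (F' y)) (at y)"
proof -
  have kk: "continuous_on UNIV (\<lambda>(b, t). F' b t)" using F'c by (simp add: case_prod_beta')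
  have Fy: "continuous_on UNIV (F y)" for y by (rule cont2_slice[OF Fc])
  have L: "((\<lambda>y. integral (cbox a b) (F y)) has_real_derivative integral (cbox a b) (F' y)) (at y)" for a b :: real
  proof -
    have i: "\<And>x. x \<in> UNIV \<Longrightarrow> F x integrable_on cbox a b"
      using integrable_continuous_real[OF continuous_on_subset[OF Fy subset_UNIV]] by simp
    have c: "continuous_on (UNIV \<times> cbox a b) (\<lambda>(x, t). F' x t)"
      by (rule continuous_on_subset[OF kk]) auto
    show ?thesis
      using leibniz_rule_field_derivative[of UNIV a b F F', OF _ i c, of y] Fd by auto
  qed
  show ?thesis
  proof (cases "c \<le> s")
    case True
    then show ?thesis using L[of c s] by (simp add: sint_def)
  next
    case False
    then show ?thesis using L[of s c] by (auto simp: sint_def intro!: derivative_eq_intros)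
  qed
qed

lemma sint_VL:
  fixes F F' :: "real \<Rightarrow> real \<Rightarrow> real" and h :: "real \<Rightarrow> real"
  assumes Fc: "continuous_on UNIV (\<lambda>z. F (fst z) (snd z))"
    and F'c: "continuous_on UNIV (\<lambda>z. F' (fst z) (snd z))"
    and Fd: "\<And>x s. ((\<lambda>x. F x s) has_real_derivative F' x s) (at x)"
    and hd: "(h has_real_derivative h') (at x)"
  shows "((\<lambda>x. sint c (h x) (F x)) has_real_derivative h' * F x (h x) + sint c (h x) (F' x)) (at x)"
proof -
  have Fy: "continuous_on UNIV (F y)" for y by (rule cont2_slice[OF Fc])
  have P: "((\<lambda>(s, y). sint c s (F y)) has_derivative (\<lambda>(ts, ty). ts * F x (h x) + blinfun_apply (blinfun_mult_right (sint c (h x) (F' x))) ty)) (at (h x, x) within UNIV \<times> UNIV)"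
  proof (rule has_derivative_partialsI)
    show "((\<lambda>s. sint c s (F x)) has_derivative (\<lambda>ts. ts * F x (h x))) (at (h x) within UNIV)"
      using sint_deriv[OF Fy[of x], of c "h x"] by (simp add: has_field_derivative_def mult_commute_abs)
    show "((\<lambda>y. sint c s (F y)) has_derivative blinfun_apply (blinfun_mult_right (sint c s (F' y)))) (at y within UNIV)"
      if "s \<in> UNIV" "y \<in> UNIV" for s y
      using sint_leibniz[OF F'c Fc Fd, of c s y]
      by (simp add: has_field_derivative_eq_has_derivative_blinfun)
    have "continuous_on UNIV (\<lambda>z. sint c (fst z) (F' (snd z)))" by (rule sint_cont2[OF F'c])
    then have "isCont (\<lambda>z. sint c (fst z) (F' (snd z))) (h x, x)"
      by (simp add: continuous_on_eq_continuous_at)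
    then have "isCont (\<lambda>z. blinfun_mult_right (sint c (fst z) (F' (snd z)))) (h x, x)"
      by (intro continuous_intros)
    then show "continuous (at (h x, x) within UNIV \<times> UNIV) (\<lambda>(s, y). blinfun_mult_right (sint c s (F' y)))"
      by (simp add: case_prod_beta')
  qed auto
  have hp: "((\<lambda>x. (h x, x)) has_derivative (\<lambda>d. (d * h', d))) (at x)"
    using hd by (auto intro!: derivative_eq_intros simp: has_field_derivative_def mult.commute)
  have P': "((\<lambda>(s, y). sint c s (F y)) has_derivative (\<lambda>(ts, ty). ts * F x (h x) + blinfun_apply (blinfun_mult_right (sint c (h x) (F' x))) ty)) (at (h x, x))"
    using P by simp
  have "((\<lambda>x. sint c (h x) (F x)) has_derivative (\<lambda>d. d * sint c (h x) (F' x) + d * (h' * F x (h x)))) (at x)"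
    using has_derivative_compose[OF hp P'] by (simp add: algebra_simps)
  then show ?thesis
    unfolding has_field_derivative_def
    by (rule has_derivative_eq_rhs) (simp add: algebra_simps fun_eq_iff)
qed




lemma cont2_comp:
  fixes H :: "real \<Rightarrow> real \<Rightarrow> real" and f1 f2 :: "'a::topological_space \<Rightarrow> real"
  assumes H: "continuous_on UNIV (\<lambda>z. H (fst z) (snd z))"
    and f1: "continuous_on UNIV f1" and f2: "continuous_on UNIV f2"
  shows "continuous_on UNIV (\<lambda>x. H (f1 x) (f2 x))"
proof -
  have "continuous_on UNIV (\<lambda>x. (f1 x, f2 x))" by (intro continuous_intros f1 f2)
  from continuous_on_compose2[OF H this] show ?thesis by simp
qed

lemma sint_minus: "sint a b (\<lambda>x. - f x) = - sint a b f"
  by (simp add: sint_def)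

lemma sint_cmult: "sint a b (\<lambda>x. c * f x) = c * sint a b f"
  by (simp add: sint_def)

definition "Gm u s z = sint 0 z (\<lambda>y. (u s y :: real) ^ 3)"
definition "Uh u p q = (u ((p - q) / 2) ((p + q) / 2) :: real)"
definition "Ah u0' u1 u p q = (u0' p + u1 p) - sint 0 ((p - q) / 2) (\<lambda>s. (u s (p - s) :: real) ^ 3)"
definition "Bh u0' u1 u p q = (u1 q - u0' q) - sint 0 ((p - q) / 2) (\<lambda>s. (u s (q + s) :: real) ^ 3)"
definition "Eh u0 u1 u p q = (u0 p + u0 q) / 2 + sint q p u1 / 2
    - sint 0 ((p - q) / 2) (\<lambda>s. Gm u s (p - s) - Gm u s (q + s)) / 2"

context
  fixes u0 u0' u1 :: "real \<Rightarrow> real" and u :: "real \<Rightarrow> real \<Rightarrow> real"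
  assumes d0: "\<And>x. (u0 has_real_derivative u0' x) (at x)"
    and c0': "continuous_on UNIV u0'"
    and c1: "continuous_on UNIV u1"
    and mild: "cubic_wave_mild_solution u0 u1 u"
begin

lemma Uc: "continuous_on UNIV (\<lambda>z. u (fst z) (snd z))"
  using mild by (simp add: cubic_wave_mild_solution_def case_prod_beta')

lemma ucomp:
  fixes f1 f2 :: "'a::topological_space \<Rightarrow> real"
  assumes "continuous_on UNIV f1" "continuous_on UNIV f2"
  shows "continuous_on UNIV (\<lambda>x. u (f1 x) (f2 x))"
  using cont2_comp[OF Uc assms] by simp

lemma u3slice: "continuous_on UNIV (\<lambda>y. u s y ^ 3)"
  by (auto intro!: continuous_intros ucomp)

lemma Gmc: "continuous_on UNIV (\<lambda>z. Gm u (fst z) (snd z))"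
proof -
  have k: "continuous_on UNIV (\<lambda>z. u (fst z) (snd z) ^ 3)"
    by (intro continuous_intros Uc)
  have "continuous_on UNIV (\<lambda>z. sint 0 (fst z) (\<lambda>y. u (snd z) y ^ 3))"
    by (rule sint_cont2[where k = "\<lambda>s y. u s y ^ 3", OF k])
  from cont2_comp[OF this continuous_on_snd[OF continuous_on_id] continuous_on_fst[OF continuous_on_id]]
  have "continuous_on UNIV (\<lambda>x::real\<times>real. sint 0 (snd x) (\<lambda>y. u (fst x) y ^ 3))" by simp
  then show ?thesis unfolding Gm_def .
qed

lemma Gmcomp:
  fixes f1 f2 :: "'a::topological_space \<Rightarrow> real"
  assumes "continuous_on UNIV f1" "continuous_on UNIV f2"
  shows "continuous_on UNIV (\<lambda>x. Gm u (f1 x) (f2 x))"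
  by (rule cont2_comp[OF Gmc assms])

lemma Gm_deriv: "((\<lambda>z. Gm u s z) has_real_derivative u s z ^ 3) (at z)"
  unfolding Gm_def by (rule sint_deriv[OF u3slice])

lemma Gm_deriv':
  "(f has_real_derivative f') (at x within S) \<Longrightarrow>
   ((\<lambda>x. Gm u s (f x)) has_real_derivative u s (f x) ^ 3 * f') (at x within S)"
  by (rule DERIV_chain2[OF Gm_deriv])

lemma u0c: "continuous_on UNIV u0"
  using d0 by (meson DERIV_isCont continuous_at_imp_continuous_on)

lemma E_eq:
  assumes "q \<le> p"
  shows "Uh u p q = Eh u0 u1 u p q"
proof -
  define t where "t = (p - q) / 2"
  define x where "x = (p + q) / 2"
  have t0: "t \<ge> 0" using assms by (simp add: t_def)
  have xt: "x + t = p" "x - t = q" by (simp_all add: x_def t_def field_simps)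
  from mild t0 have "u t x = (u0 (x + t) + u0 (x - t)) / 2
                + integral {x - t .. x + t} u1 / 2
                - integral {0 .. t} (\<lambda>s. integral {x - (t - s) .. x + (t - s)} (\<lambda>y. (u s y) ^ 3)) / 2"
    by (simp add: cubic_wave_mild_solution_def)
  also have "integral {x - t .. x + t} u1 = sint q p u1"
    using assms by (simp add: xt sint_eq)
  also have "integral {0 .. t} (\<lambda>s. integral {x - (t - s) .. x + (t - s)} (\<lambda>y. (u s y) ^ 3))
      = sint 0 t (\<lambda>s. Gm u s (p - s) - Gm u s (q + s))"
  proof -
    have "integral {0 .. t} (\<lambda>s. integral {x - (t - s) .. x + (t - s)} (\<lambda>y. (u s y) ^ 3))
        = integral {0 .. t} (\<lambda>s. Gm u s (p - s) - Gm u s (q + s))"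
    proof (rule integral_cong)
      fix s assume s: "s \<in> {0..t}"
      have e: "x - (t - s) = q + s" "x + (t - s) = p - s" using xt by auto
      have "sint 0 (q + s) (\<lambda>y. u s y ^ 3) + sint (q + s) (p - s) (\<lambda>y. u s y ^ 3) = sint 0 (p - s) (\<lambda>y. u s y ^ 3)"
        by (rule sint_add[OF u3slice])
      moreover have "q + s \<le> p - s" using s by (simp add: t_def)
      ultimately show "integral {x - (t - s) .. x + (t - s)} (\<lambda>y. (u s y) ^ 3) = Gm u s (p - s) - Gm u s (q + s)"
        unfolding e Gm_def by (simp add: sint_eq)
    qed
    then show ?thesis using t0 by (simp add: sint_eq)
  qed
  finally show ?thesis
    by (simp add: Uh_def Eh_def t_def[symmetric] x_def[symmetric] xt)
qed

lemma E_dp: "((\<lambda>p. Eh u0 u1 u p q) has_real_derivative Ah u0' u1 u p q / 2) (at p)"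
proof -
  have V: "((\<lambda>p. sint 0 ((p - q) / 2) (\<lambda>s. Gm u s (p - s) - Gm u s (q + s))) has_real_derivative
      (1/2) * (Gm u ((p - q) / 2) (p - (p - q) / 2) - Gm u ((p - q) / 2) (q + (p - q) / 2))
      + sint 0 ((p - q) / 2) (\<lambda>s. u s (p - s) ^ 3)) (at p)"
  proof (rule sint_VL[where F = "\<lambda>p s. Gm u s (p - s) - Gm u s (q + s)" and F' = "\<lambda>p s. u s (p - s) ^ 3"])
    show "continuous_on UNIV (\<lambda>z. Gm u (snd z) (fst z - snd z) - Gm u (snd z) (q + snd z))"
      by (intro continuous_intros Gmcomp)
    show "continuous_on UNIV (\<lambda>z. u (snd z) (fst z - snd z) ^ 3)"
      by (intro continuous_intros ucomp)
    show "((\<lambda>p. Gm u s (p - s) - Gm u s (q + s)) has_real_derivative u s (p - s) ^ 3) (at p)" for p s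
      by (auto intro!: derivative_eq_intros Gm_deriv')
    show "((\<lambda>p. (p - q) / 2) has_real_derivative 1/2) (at p)"
      by (auto intro!: derivative_eq_intros)
  qed
  have e: "p - (p - q) / 2 = q + (p - q) / 2" by (simp add: field_simps)
  have "((\<lambda>p. Eh u0 u1 u p q) has_real_derivative
     (u0' p + 0) / 2 + u1 p / 2 - ((1/2) * 0 + sint 0 ((p - q) / 2) (\<lambda>s. u s (p - s) ^ 3)) / 2) (at p)"
    unfolding Eh_def using V unfolding e
    by (auto intro!: derivative_eq_intros d0 sint_deriv[OF c1])
  then show ?thesis by (rule DERIV_cong) (simp add: Ah_def field_simps)
qed

lemma E_dq: "((\<lambda>q. Eh u0 u1 u p q) has_real_derivative - Bh u0' u1 u p q / 2) (at q)"
proof -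
  have V: "((\<lambda>q. sint 0 ((p - q) / 2) (\<lambda>s. Gm u s (p - s) - Gm u s (q + s))) has_real_derivative
      (-1/2) * (Gm u ((p - q) / 2) (p - (p - q) / 2) - Gm u ((p - q) / 2) (q + (p - q) / 2))
      + sint 0 ((p - q) / 2) (\<lambda>s. - (u s (q + s) ^ 3))) (at q)"
  proof (rule sint_VL[where F = "\<lambda>q s. Gm u s (p - s) - Gm u s (q + s)" and F' = "\<lambda>q s. - (u s (q + s) ^ 3)"])
    show "continuous_on UNIV (\<lambda>z. Gm u (snd z) (p - snd z) - Gm u (snd z) (fst z + snd z))"
      by (intro continuous_intros Gmcomp)
    show "continuous_on UNIV (\<lambda>z. - (u (snd z) (fst z + snd z) ^ 3))"
      by (intro continuous_intros ucomp)
    show "((\<lambda>q. Gm u s (p - s) - Gm u s (q + s)) has_real_derivative - (u s (q + s) ^ 3)) (at q)" for q s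
      by (auto intro!: derivative_eq_intros Gm_deriv')
    show "((\<lambda>q. (p - q) / 2) has_real_derivative -1/2) (at q)"
      by (auto intro!: derivative_eq_intros)
  qed
  have e: "p - (p - q) / 2 = q + (p - q) / 2" by (simp add: field_simps)
  have sw: "sint q p u1 = - sint p q u1" by (rule sint_swap)
  have "((\<lambda>q. Eh u0 u1 u p q) has_real_derivative
     (0 + u0' q) / 2 + (- u1 q) / 2 - ((-1/2) * 0 + sint 0 ((p - q) / 2) (\<lambda>s. - (u s (q + s) ^ 3))) / 2) (at q)"
    unfolding Eh_def sint_swap[of _ p u1] using V unfolding e
    by (auto intro!: derivative_eq_intros d0 sint_deriv[OF c1])
  then show ?thesis by (rule DERIV_cong) (simp add: Bh_def field_simps sint_minus)
qed

end



lemma sint_deriv':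
  fixes f :: "real \<Rightarrow> real"
  assumes f: "continuous_on UNIV f" and g: "(g has_real_derivative g') (at x within S)"
  shows "((\<lambda>x. sint a (g x) f) has_real_derivative f (g x) * g') (at x within S)"
  by (rule DERIV_chain2[OF sint_deriv[OF f] g])

lemma cfst: "continuous_on UNIV (fst :: real \<times> real \<Rightarrow> real)"
  using continuous_on_fst[OF continuous_on_id] by (simp add: id_def)
lemma csnd: "continuous_on UNIV (snd :: real \<times> real \<Rightarrow> real)"
  using continuous_on_snd[OF continuous_on_id] by (simp add: id_def)
lemma cdiff2: "continuous_on UNIV (\<lambda>z::real\<times>real. (fst z - snd z) / 2)"
  by (auto intro!: continuous_intros)

context
  fixes u0 u0' u1 :: "real \<Rightarrow> real" and u :: "real \<Rightarrow> real \<Rightarrow> real"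
  assumes d0: "\<And>x. (u0 has_real_derivative u0' x) (at x)"
    and c0': "continuous_on UNIV u0'"
    and c1: "continuous_on UNIV u1"
    and mild: "cubic_wave_mild_solution u0 u1 u"
begin

lemmas L = Uc[OF d0 c0' c1 mild] ucomp[OF d0 c0' c1 mild] u3slice[OF d0 c0' c1 mild] E_eq[OF d0 c0' c1 mild]
  E_dp[OF d0 c0' c1 mild] E_dq[OF d0 c0' c1 mild] u0c[OF d0 c0' c1 mild]

lemma F1:
  assumes "q \<le> p"
  shows "((\<lambda>p. Uh u p q) has_real_derivative Ah u0' u1 u p q / 2) (at p within {q..})"
proof (rule has_field_derivative_transform_within[OF has_field_derivative_at_within[OF L(5)]])
  show "p \<in> {q..}" using assms by simp
  show "\<And>x. x \<in> {q..} \<Longrightarrow> dist x p < 1 \<Longrightarrow> Eh u0 u1 u x q = Uh u x q"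
    using L(4) by auto
qed simp

lemma F2:
  assumes "q \<le> p"
  shows "((\<lambda>q. Uh u p q) has_real_derivative - Bh u0' u1 u p q / 2) (at q within {..p})"
proof (rule has_field_derivative_transform_within[OF has_field_derivative_at_within[OF L(6)]])
  show "q \<in> {..p}" using assms by simp
  show "\<And>x. x \<in> {..p} \<Longrightarrow> dist x q < 1 \<Longrightarrow> Eh u0 u1 u p x = Uh u p x"
    using L(4) by auto
qed simp

lemma F3: "((\<lambda>q. Ah u0' u1 u p q) has_real_derivative Uh u p q ^ 3 / 2) (at q)"
proof -
  have "((\<lambda>q. Ah u0' u1 u p q) has_real_derivative 0 - u ((p - q) / 2) (p - (p - q) / 2) ^ 3 * (- 1 / 2)) (at q)"
    unfolding Ah_def
    by (intro derivative_intros sint_deriv'[where f = "\<lambda>s. u s (p - s) ^ 3"])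
       (auto intro!: continuous_intros L(2) derivative_eq_intros)
  moreover have "p - (p - q) / 2 = (p + q) / 2" by (simp add: field_simps)
  ultimately show ?thesis by (simp add: Uh_def)
qed

lemma F4: "((\<lambda>p. Bh u0' u1 u p q) has_real_derivative - (Uh u p q ^ 3 / 2)) (at p)"
proof -
  have "((\<lambda>p. Bh u0' u1 u p q) has_real_derivative 0 - u ((p - q) / 2) (q + (p - q) / 2) ^ 3 * (1 / 2)) (at p)"
    unfolding Bh_def
    by (intro derivative_intros sint_deriv'[where f = "\<lambda>s. u s (q + s) ^ 3"])
       (auto intro!: continuous_intros L(2) derivative_eq_intros)
  moreover have "q + (p - q) / 2 = (p + q) / 2" by (simp add: field_simps)
  ultimately show ?thesis by (simp add: Uh_def)
qed

lemma Ahc: "continuous_on UNIV (\<lambda>z. Ah u0' u1 u (fst z) (snd z))"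
proof -
  have k: "continuous_on UNIV (\<lambda>z. u (snd z) (fst z - snd z) ^ 3)"
    by (auto intro!: continuous_intros L(2))
  have "continuous_on UNIV (\<lambda>z. sint 0 (fst z) (\<lambda>s. u s (snd z - s) ^ 3))"
    by (rule sint_cont2[where k = "\<lambda>b s. u s (b - s) ^ 3", OF k])
  from cont2_comp[OF this cdiff2 cfst]
  have "continuous_on UNIV (\<lambda>z::real\<times>real. sint 0 ((fst z - snd z) / 2) (\<lambda>s. u s (fst z - s) ^ 3))"
    by simp
  then show ?thesis unfolding Ah_def
    by (auto intro!: continuous_intros continuous_on_compose2[OF c0'] continuous_on_compose2[OF c1])
qed

lemma Bhc: "continuous_on UNIV (\<lambda>z. Bh u0' u1 u (fst z) (snd z))"
proof -
  have k: "continuous_on UNIV (\<lambda>z. u (snd z) (fst z + snd z) ^ 3)"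
    by (auto intro!: continuous_intros L(2))
  have "continuous_on UNIV (\<lambda>z. sint 0 (fst z) (\<lambda>s. u s (snd z + s) ^ 3))"
    by (rule sint_cont2[where k = "\<lambda>b s. u s (b + s) ^ 3", OF k])
  from cont2_comp[OF this cdiff2 csnd]
  have "continuous_on UNIV (\<lambda>z::real\<times>real. sint 0 ((fst z - snd z) / 2) (\<lambda>s. u s (snd z + s) ^ 3))"
    by simp
  then show ?thesis unfolding Bh_def
    by (auto intro!: continuous_intros continuous_on_compose2[OF c0'] continuous_on_compose2[OF c1])
qed

lemma Uhc: "continuous_on UNIV (\<lambda>z. Uh u (fst z) (snd z))"
  unfolding Uh_def by (auto intro!: continuous_intros L(2))

lemma Ah_diag: "Ah u0' u1 u q q = u0' q + u1 q" by (simp add: Ah_def)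
lemma Bh_diag: "Bh u0' u1 u p p = u1 p - u0' p" by (simp add: Bh_def)
lemma Uh_diag: "Uh u q q = u0 q" using L(4)[of q q] by (simp add: Eh_def)

end



lemma ftc_real:
  fixes f f' :: "real \<Rightarrow> real"
  assumes "a \<le> b" "\<And>x. x \<in> {a..b} \<Longrightarrow> (f has_real_derivative f' x) (at x within {a..b})"
  shows "(f' has_integral (f b - f a)) {a..b}"
  using assms by (intro fundamental_theorem_of_calculus) (auto simp: has_real_derivative_iff_has_vector_derivative)

context
  fixes u0 u0' u1 :: "real \<Rightarrow> real" and u :: "real \<Rightarrow> real \<Rightarrow> real"
  assumes d0: "\<And>x. (u0 has_real_derivative u0' x) (at x)"
    and c0': "continuous_on UNIV u0'"
    and c1: "continuous_on UNIV u1"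
    and mild: "cubic_wave_mild_solution u0 u1 u"
begin

lemmas M = F1[OF d0 c0' c1 mild] F2[OF d0 c0' c1 mild] F3[OF d0 c0' c1 mild] F4[OF d0 c0' c1 mild]
  Ahc[OF d0 c0' c1 mild] Bhc[OF d0 c0' c1 mild] Uhc[OF d0 c0' c1 mild]
  Ah_diag[OF d0 c0' c1 mild] Bh_diag[OF d0 c0' c1 mild] Uh_diag[OF d0 c0' c1 mild]

abbreviation "A' \<equiv> Ah u0' u1 u"
abbreviation "B' \<equiv> Bh u0' u1 u"
abbreviation "U' \<equiv> Uh u"

lemma Acomp: "continuous_on UNIV f1 \<Longrightarrow> continuous_on UNIV f2 \<Longrightarrow> continuous_on UNIV (\<lambda>x. A' (f1 x) (f2 x))"
  using cont2_comp[OF M(5)] by simp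
lemma Bcomp: "continuous_on UNIV f1 \<Longrightarrow> continuous_on UNIV f2 \<Longrightarrow> continuous_on UNIV (\<lambda>x. B' (f1 x) (f2 x))"
  using cont2_comp[OF M(6)] by simp
lemma Ucomp: "continuous_on UNIV f1 \<Longrightarrow> continuous_on UNIV f2 \<Longrightarrow> continuous_on UNIV (\<lambda>x. U' (f1 x) (f2 x))"
  using cont2_comp[OF M(7)] by simp

lemma energy1:
  assumes qp: "q0 \<le> p0" and K: "\<And>y. (u0' y + u1 y) ^ 2 + u0 y ^ 4 / 2 \<le> K"
  shows "integral {q0..p0} (\<lambda>p. A' p q0 ^ 2) \<le> K * (p0 - q0)"
proof -
  define Psi where "Psi q = sint p0 q (\<lambda>p. A' p q ^ 2)" for q
  define Psi' where "Psi' q = A' q q ^ 2 + sint p0 q (\<lambda>p. A' p q * U' p q ^ 3)" for q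
  have d: "(Psi has_real_derivative Psi' q) (at q)" for q
  proof -
    have "((\<lambda>q. sint p0 ((\<lambda>q. q) q) (\<lambda>p. A' p q ^ 2)) has_real_derivative
        1 * A' ((\<lambda>q. q) q) q ^ 2 + sint p0 ((\<lambda>q. q) q) (\<lambda>p. A' p q * U' p q ^ 3)) (at q)"
    proof (rule sint_VL[where F = "\<lambda>q p. A' p q ^ 2" and F' = "\<lambda>q p. A' p q * U' p q ^ 3"])
      show "continuous_on UNIV (\<lambda>z. A' (snd z) (fst z) ^ 2)"
        by (intro continuous_intros Acomp cfst csnd)
      show "continuous_on UNIV (\<lambda>z. A' (snd z) (fst z) * U' (snd z) (fst z) ^ 3)"
        by (intro continuous_intros Acomp Ucomp cfst csnd)
      show "((\<lambda>q. A' s q ^ 2) has_real_derivative A' s q * U' s q ^ 3) (at q)" for q s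
        by (rule DERIV_cong[OF DERIV_power[OF M(3)]]) (simp add: field_simps)
    qed (auto intro!: derivative_eq_intros)
    moreover have "Psi = (\<lambda>q. sint p0 q (\<lambda>p. A' p q ^ 2))" by (simp add: fun_eq_iff Psi_def)
    ultimately show ?thesis by (simp add: Psi'_def)
  qed
  have I: "(Psi' has_integral (Psi p0 - Psi q0)) {q0..p0}"
    by (rule ftc_real[OF qp]) (auto intro: has_field_derivative_at_within d)
  have bnd: "Psi' q \<le> K" if q: "q \<in> {q0..p0}" for q
  proof -
    have qp': "q \<le> p0" using q by simp
    have "((\<lambda>p. A' p q * U' p q ^ 3) has_integral (U' p0 q ^ 4 / 2 - U' q q ^ 4 / 2)) {q..p0}"
    proof (rule ftc_real[OF qp', where f = "\<lambda>p. U' p q ^ 4 / 2"])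
      fix p assume p: "p \<in> {q..p0}"
      have "((\<lambda>p. U' p q) has_real_derivative A' p q / 2) (at p within {q..p0})"
        by (rule DERIV_subset[OF M(1)]) (use p in auto)
      from DERIV_cdivide[OF DERIV_power[OF this, of 4], of 2]
      show "((\<lambda>p. U' p q ^ 4 / 2) has_real_derivative A' p q * U' p q ^ 3) (at p within {q..p0})"
        by (rule DERIV_cong) (simp add: field_simps)
    qed
    then have "sint q p0 (\<lambda>p. A' p q * U' p q ^ 3) = U' p0 q ^ 4 / 2 - U' q q ^ 4 / 2"
      using qp' by (simp add: sint_eq integral_unique)
    then have "Psi' q = (u0' q + u1 q) ^ 2 + u0 q ^ 4 / 2 - U' p0 q ^ 4 / 2"
      unfolding Psi'_def using sint_swap[of p0 q] by (simp add: M(8) M(10))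
    also have "\<dots> \<le> K"
    proof -
      have "U' p0 q ^ 4 \<ge> 0" by (simp add: zero_le_even_power)
      then show ?thesis using K[of q] by linarith
    qed
    finally show ?thesis .
  qed
  have "Psi p0 - Psi q0 \<le> K * (p0 - q0)"
    using has_integral_le[OF I has_integral_const_real[of K q0 p0]] bnd qp by (auto simp: mult.commute)
  moreover have "Psi p0 = 0" by (simp add: Psi_def)
  moreover have "Psi q0 = - integral {q0..p0} (\<lambda>p. A' p q0 ^ 2)"
    unfolding Psi_def using sint_swap[of p0 q0] qp by (simp add: sint_eq)
  ultimately show ?thesis by simp
qed

lemma energy2:
  assumes qp: "q0 \<le> p0" and K: "\<And>y. (u1 y - u0' y) ^ 2 + u0 y ^ 4 / 2 \<le> K"
  shows "integral {q0..p0} (\<lambda>p. U' p q0 ^ 4) \<le> 2 * K * (p0 - q0)"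
proof -
  define Phi where "Phi p = sint q0 p (\<lambda>q. B' p q ^ 2)" for p
  define Phi' where "Phi' p = B' p p ^ 2 + sint q0 p (\<lambda>q. - (B' p q * U' p q ^ 3))" for p
  have d: "(Phi has_real_derivative Phi' p) (at p)" for p
  proof -
    have "((\<lambda>p. sint q0 ((\<lambda>p. p) p) (\<lambda>q. B' p q ^ 2)) has_real_derivative
        1 * B' p ((\<lambda>p. p) p) ^ 2 + sint q0 ((\<lambda>p. p) p) (\<lambda>q. - (B' p q * U' p q ^ 3))) (at p)"
    proof (rule sint_VL[where F = "\<lambda>p q. B' p q ^ 2" and F' = "\<lambda>p q. - (B' p q * U' p q ^ 3)"])
      show "continuous_on UNIV (\<lambda>z. B' (fst z) (snd z) ^ 2)"
        by (intro continuous_intros Bcomp cfst csnd)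
      show "continuous_on UNIV (\<lambda>z. - (B' (fst z) (snd z) * U' (fst z) (snd z) ^ 3))"
        by (intro continuous_intros Bcomp Ucomp cfst csnd)
      show "((\<lambda>p. B' p s ^ 2) has_real_derivative - (B' p s * U' p s ^ 3)) (at p)" for p s
        by (rule DERIV_cong[OF DERIV_power[OF M(4)]]) (simp add: field_simps)
    qed (auto intro!: derivative_eq_intros)
    moreover have "Phi = (\<lambda>p. sint q0 p (\<lambda>q. B' p q ^ 2))" by (simp add: fun_eq_iff Phi_def)
    ultimately show ?thesis by (simp add: Phi'_def)
  qed
  have I: "(Phi' has_integral (Phi p0 - Phi q0)) {q0..p0}"
    by (rule ftc_real[OF qp]) (auto intro: has_field_derivative_at_within d)
  have cU: "continuous_on UNIV (\<lambda>p. U' p q0 ^ 4)"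
    by (auto intro!: continuous_intros Ucomp)
  have J: "((\<lambda>p. U' p q0 ^ 4 * (1/2)) has_integral (integral {q0..p0} (\<lambda>p. U' p q0 ^ 4) * (1/2))) {q0..p0}"
    by (intro has_integral_mult_left integrable_integral integrable_continuous_real continuous_on_subset[OF cU]) auto
  have bnd: "Phi' p + U' p q0 ^ 4 * (1/2) \<le> K" if p: "p \<in> {q0..p0}" for p
  proof -
    have qp': "q0 \<le> p" using p by simp
    have "((\<lambda>q. - (B' p q * U' p q ^ 3)) has_integral (U' p p ^ 4 / 2 - U' p q0 ^ 4 / 2)) {q0..p}"
    proof (rule ftc_real[OF qp', where f = "\<lambda>q. U' p q ^ 4 / 2"])
      fix q assume q: "q \<in> {q0..p}"
      have "((\<lambda>q. U' p q) has_real_derivative - B' p q / 2) (at q within {q0..p})"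
        by (rule DERIV_subset[OF M(2)]) (use q in auto)
      from DERIV_cdivide[OF DERIV_power[OF this, of 4], of 2]
      show "((\<lambda>q. U' p q ^ 4 / 2) has_real_derivative - (B' p q * U' p q ^ 3)) (at q within {q0..p})"
        by (rule DERIV_cong) (simp add: field_simps)
    qed
    then have "sint q0 p (\<lambda>q. - (B' p q * U' p q ^ 3)) = U' p p ^ 4 / 2 - U' p q0 ^ 4 / 2"
      unfolding sint_eq[OF qp'] by (rule integral_unique)
    then have "Phi' p + U' p q0 ^ 4 * (1/2) = (u1 p - u0' p) ^ 2 + u0 p ^ 4 / 2"
      unfolding Phi'_def by (simp add: M(9) M(10))
    also have "\<dots> \<le> K" using K[of p] by simp
    finally show ?thesis .
  qed
  have "Phi p0 - Phi q0 + integral {q0..p0} (\<lambda>p. U' p q0 ^ 4) * (1/2) \<le> K * (p0 - q0)"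
    using has_integral_le[OF has_integral_add[OF I J] has_integral_const_real[of K q0 p0]] bnd qp
    by (auto simp: mult.commute)
  moreover have "Phi q0 = 0" by (simp add: Phi_def)
  moreover have "Phi p0 \<ge> 0"
  proof -
    have cB: "continuous_on UNIV (\<lambda>q. B' p0 q ^ 2)"
      by (auto intro!: continuous_intros Bcomp)
    have "integral {q0..p0} (\<lambda>q. B' p0 q ^ 2) \<ge> 0"
      by (rule integral_nonneg) (auto intro!: integrable_continuous_real continuous_on_subset[OF cB])
    then show ?thesis unfolding Phi_def using qp by (simp add: sint_eq)
  qed
  ultimately show ?thesis by linarith
qed

end



lemma quart_bound:
  fixes w K :: real
  assumes "w \<ge> 0" "K \<ge> 0" "w ^ 4 \<le> 4 * K"
  shows "w \<le> 4 * K + 1"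
proof (cases "w \<ge> 1")
  case True
  then have "w \<le> w ^ 4"
    by (metis le_less_trans less_le_not_le one_le_power order_refl power_increasing zero_less_numeral power_one_right numeral_le_iff semiring_norm(70) one_le_numeral)
  with assms show ?thesis by linarith
next
  case False
  with assms show ?thesis by linarith
qed

lemma amgm_c:
  fixes a c :: real
  assumes "c > 0"
  shows "\<bar>a\<bar> / 2 \<le> (a ^ 2 / c ^ 2 + c ^ 2) / 4"
proof -
  have "0 \<le> (\<bar>a\<bar> / c - c) ^ 2" by simp
  also have "(\<bar>a\<bar> / c - c) ^ 2 = a ^ 2 / c ^ 2 - 2 * \<bar>a\<bar> + c ^ 2"
    using assms by (simp add: power2_eq_square field_simps)
  finally show ?thesis by simp
qed

context
  fixes u0 u0' u1 :: "real \<Rightarrow> real" and u :: "real \<Rightarrow> real \<Rightarrow> real"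
  assumes d0: "\<And>x. (u0 has_real_derivative u0' x) (at x)"
    and c0': "continuous_on UNIV u0'"
    and c1: "continuous_on UNIV u1"
    and mild: "cubic_wave_mild_solution u0 u1 u"
begin

lemmas N = energy1[OF d0 c0' c1 mild] energy2[OF d0 c0' c1 mild]
  Acomp[OF d0 c0' c1 mild] Ucomp[OF d0 c0' c1 mild] F1[OF d0 c0' c1 mild]

lemma pointwise:
  assumes t0: "t0 \<ge> 1" and K0: "K \<ge> 0"
    and K1: "\<And>y. (u0' y + u1 y) ^ 2 + u0 y ^ 4 / 2 \<le> K"
    and K2: "\<And>y. (u1 y - u0' y) ^ 2 + u0 y ^ 4 / 2 \<le> K"
  shows "\<bar>u t0 x0\<bar> \<le> (5 * K + 2) * t0 powr (1/3)"
proof -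
  define p0 where "p0 = x0 + t0"
  define q0 where "q0 = x0 - t0"
  define c where "c = t0 powr (1/3)"
  have c1': "c \<ge> 1" unfolding c_def using t0 by (simp add: ge_one_powr_ge_zero)
  have c3: "c ^ 3 = t0" unfolding c_def using t0 by (simp add: powr_power)
  define L where "L = 1 / c"
  have L0: "L > 0" "L \<le> 1" using c1' by (auto simp: L_def)
  define a where "a = p0 - L"
  have qa: "q0 \<le> a" "a \<le> p0" using L0 t0 by (auto simp: a_def p0_def q0_def)
  have qp: "q0 \<le> p0" using qa by simp
  have ut: "u t0 x0 = Uh u p0 q0" by (simp add: Uh_def p0_def q0_def)
  have pq: "p0 - q0 = 2 * t0" by (simp add: p0_def q0_def)
  have E1: "integral {q0..p0} (\<lambda>p. Ah u0' u1 u p q0 ^ 2) \<le> K * (2 * t0)"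
    using N(1)[OF qp K1] pq by simp
  have E2: "integral {q0..p0} (\<lambda>p. Uh u p q0 ^ 4) \<le> 2 * K * (2 * t0)"
    using N(2)[OF qp K2] pq by simp
  have cA2: "continuous_on UNIV (\<lambda>p. Ah u0' u1 u p q0 ^ 2)"
    by (auto intro!: continuous_intros N(3))
  have cA: "continuous_on UNIV (\<lambda>p. Ah u0' u1 u p q0)"
    by (auto intro!: continuous_intros N(3))
  have cU4: "continuous_on UNIV (\<lambda>p. Uh u p q0 ^ 4)"
    by (auto intro!: continuous_intros N(4))
  have intg: "f integrable_on {x..y}" if "continuous_on UNIV f" for f :: "real \<Rightarrow> real" and x y
    by (rule integrable_continuous_real[OF continuous_on_subset[OF that]]) auto
  obtain ps where ps: "ps \<in> {a..p0}" and psmin: "\<And>y. y \<in> {a..p0} \<Longrightarrow> Uh u ps q0 ^ 4 \<le> Uh u y q0 ^ 4"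
    using continuous_attains_inf[OF compact_Icc _ continuous_on_subset[OF cU4], of a p0] qa by auto
  have "integral {a..p0} (\<lambda>_. Uh u ps q0 ^ 4) \<le> integral {a..p0} (\<lambda>p. Uh u p q0 ^ 4)"
    by (rule integral_le) (auto intro: intg cU4 psmin)
  also have "\<dots> \<le> integral {q0..p0} (\<lambda>p. Uh u p q0 ^ 4)"
    by (rule integral_subset_le) (use qa in \<open>auto intro: intg cU4 simp: zero_le_even_power\<close>)
  finally have "Uh u ps q0 ^ 4 * L \<le> 4 * K * t0"
    using E2 qa by (simp add: a_def mult.commute[of "Uh u ps q0 ^ 4"] mult.assoc)
  then have "Uh u ps q0 ^ 4 \<le> 4 * K * t0 * c"
    using c1' by (simp add: L_def field_simps)
  also have "\<dots> = 4 * K * c ^ 4" using c3 by (simp add: power_Suc2 power_numeral_reduce)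
  finally have "(\<bar>Uh u ps q0\<bar> / c) ^ 4 \<le> 4 * K"
    using c1' by (simp add: power_divide field_simps power_abs)
  from quart_bound[OF _ K0 this] c1'
  have Ups: "\<bar>Uh u ps q0\<bar> \<le> (4 * K + 1) * c" by (simp add: field_simps)
  have ftc: "((\<lambda>p. Ah u0' u1 u p q0 / 2) has_integral (Uh u p0 q0 - Uh u ps q0)) {ps..p0}"
  proof (rule ftc_real)
    show "ps \<le> p0" using ps by simp
    fix p assume p: "p \<in> {ps..p0}"
    show "((\<lambda>p. Uh u p q0) has_real_derivative Ah u0' u1 u p q0 / 2) (at p within {ps..p0})"
      by (rule DERIV_subset[OF N(5)]) (use p ps qa in auto)
  qed
  have g_int: "((\<lambda>p. (Ah u0' u1 u p q0 ^ 2 * (1 / c ^ 2) + c ^ 2) * (1/4)) has_integral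
      ((integral {a..p0} (\<lambda>p. Ah u0' u1 u p q0 ^ 2) * (1 / c ^ 2) + c ^ 2 * (p0 - a)) * (1/4))) {a..p0}"
  proof -
    have h1: "((\<lambda>p. Ah u0' u1 u p q0 ^ 2) has_integral integral {a..p0} (\<lambda>p. Ah u0' u1 u p q0 ^ 2)) {a..p0}"
      by (rule integrable_integral[OF intg[OF cA2]])
    note h2 = has_integral_mult_left[OF h1, of "1 / c ^ 2"]
    have h3: "((\<lambda>p. c ^ 2) has_integral (c ^ 2 * (p0 - a))) {a..p0}"
      using has_integral_const_real[of "c ^ 2" a p0] qa by (simp add: mult.commute)
    show ?thesis by (rule has_integral_mult_left[OF has_integral_add[OF h2 h3]])
  qed
  have "\<bar>Uh u p0 q0 - Uh u ps q0\<bar> = norm (integral {ps..p0} (\<lambda>p. Ah u0' u1 u p q0 / 2))"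
    using integral_unique[OF ftc] by (simp only: real_norm_def)
  also have "\<dots> \<le> integral {ps..p0} (\<lambda>p. \<bar>Ah u0' u1 u p q0\<bar> / 2)"
    by (rule integral_norm_bound_integral) (auto intro!: intg continuous_intros cA)
  also have "\<dots> \<le> integral {a..p0} (\<lambda>p. \<bar>Ah u0' u1 u p q0\<bar> / 2)"
    by (rule integral_subset_le) (use ps in \<open>auto intro!: intg continuous_intros cA\<close>)
  also have "\<dots> \<le> (integral {a..p0} (\<lambda>p. Ah u0' u1 u p q0 ^ 2) * (1 / c ^ 2) + c ^ 2 * (p0 - a)) * (1/4)"
  proof (rule has_integral_le[OF integrable_integral[OF intg] g_int])
    show "continuous_on UNIV (\<lambda>p. \<bar>Ah u0' u1 u p q0\<bar> / 2)" by (auto intro!: continuous_intros cA)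
    fix p show "\<bar>Ah u0' u1 u p q0\<bar> / 2 \<le> ((Ah u0' u1 u p q0)\<^sup>2 * (1 / c\<^sup>2) + c\<^sup>2) * (1 / 4)"
      using amgm_c[of c "Ah u0' u1 u p q0"] c1' by simp
  qed
  also have "\<dots> \<le> (K * (2 * t0) / c ^ 2 + c ^ 2 * L) / 4"
  proof -
    have "integral {a..p0} (\<lambda>p. Ah u0' u1 u p q0 ^ 2) \<le> integral {q0..p0} (\<lambda>p. Ah u0' u1 u p q0 ^ 2)"
      by (rule integral_subset_le) (use qa in \<open>auto intro: intg cA2\<close>)
    with E1 have "integral {a..p0} (\<lambda>p. Ah u0' u1 u p q0 ^ 2) / c ^ 2 \<le> K * (2 * t0) / c ^ 2"
      by (intro divide_right_mono) auto
    then have X: "(integral {a..p0} (\<lambda>p. Ah u0' u1 u p q0 ^ 2) / c ^ 2 + c ^ 2 * L) / 4 \<le> (K * (2 * t0) / c ^ 2 + c ^ 2 * L) / 4"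
      by (rule divide_right_mono[OF add_right_mono]) auto
    have EQ: "(integral {a..p0} (\<lambda>p. Ah u0' u1 u p q0 ^ 2) * (1 / c ^ 2) + c ^ 2 * (p0 - a)) * (1/4)
        = (integral {a..p0} (\<lambda>p. Ah u0' u1 u p q0 ^ 2) / c ^ 2 + c ^ 2 * L) / 4"
      by (simp add: a_def)
    show ?thesis unfolding EQ by (rule X)
  qed
  also have "\<dots> = (2 * K + 1) * c / 4"
    using c1' c3[symmetric] by (simp add: L_def field_simps power2_eq_square power3_eq_cube)
  finally have D: "\<bar>Uh u p0 q0 - Uh u ps q0\<bar> \<le> (2 * K + 1) * c / 4" .
  have "\<bar>u t0 x0\<bar> \<le> (4 * K + 1) * c + (2 * K + 1) * c / 4"
    using Ups D unfolding ut by linarith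
  also have "\<dots> \<le> (5 * K + 2) * c" using K0 c1' by (simp add: field_simps)
  finally show ?thesis by (simp add: c_def)
qed

end


theorem proposition1:
  fixes A B D :: real
  shows "\<exists>C :: real. \<forall>(u0 :: real \<Rightarrow> real) (u0' :: real \<Rightarrow> real) (u1 :: real \<Rightarrow> real) (u :: real \<Rightarrow> real \<Rightarrow> real).
           (\<forall>x. (u0 has_real_derivative u0' x) (at x)) \<and> continuous_on UNIV u0' \<and>
           continuous_on UNIV u1 \<and>
           (\<forall>x. \<bar>u0 x\<bar> \<le> A) \<and> (\<forall>x. \<bar>u0' x\<bar> \<le> B) \<and> (\<forall>x. \<bar>u1 x\<bar> \<le> D) \<and>
           cubic_wave_mild_solution u0 u1 u
           \<longrightarrow> (\<forall>t x. t \<ge> 1 \<longrightarrow> \<bar>u t x\<bar> \<le> C * t powr (1/3))"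
proof -
  define K where "K = (B + D) ^ 2 + A ^ 4 / 2"
  have K0: "K \<ge> 0" by (simp add: K_def zero_le_even_power)
  show ?thesis
  proof (rule exI[of _ "5 * K + 2"], intro allI impI)
    fix u0 u0' u1 :: "real \<Rightarrow> real" and u :: "real \<Rightarrow> real \<Rightarrow> real"
    assume H: "(\<forall>x. (u0 has_real_derivative u0' x) (at x)) \<and> continuous_on UNIV u0' \<and>
           continuous_on UNIV u1 \<and>
           (\<forall>x. \<bar>u0 x\<bar> \<le> A) \<and> (\<forall>x. \<bar>u0' x\<bar> \<le> B) \<and> (\<forall>x. \<bar>u1 x\<bar> \<le> D) \<and>
           cubic_wave_mild_solution u0 u1 u"
    then have d0: "\<And>x. (u0 has_real_derivative u0' x) (at x)" and c0': "continuous_on UNIV u0'"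
      and c1: "continuous_on UNIV u1" and bA: "\<And>x. \<bar>u0 x\<bar> \<le> A" and bB: "\<And>x. \<bar>u0' x\<bar> \<le> B"
      and bD: "\<And>x. \<bar>u1 x\<bar> \<le> D" and mild: "cubic_wave_mild_solution u0 u1 u"
      by auto
    have u4: "u0 y ^ 4 \<le> A ^ 4" for y
    proof -
      have "\<bar>u0 y\<bar> ^ 4 \<le> A ^ 4" by (rule power_mono[OF bA]) simp
      then show ?thesis by (simp add: power_abs)
    qed
    have sq: "x ^ 2 \<le> (B + D) ^ 2" if "\<bar>x\<bar> \<le> B + D" for x :: real
    proof -
      have "\<bar>x\<bar> ^ 2 \<le> (B + D) ^ 2" by (rule power_mono[OF that]) simp
      then show ?thesis by simp
    qed
    have K1: "(u0' y + u1 y) ^ 2 + u0 y ^ 4 / 2 \<le> K" for y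
    proof -
      have "\<bar>u0' y + u1 y\<bar> \<le> B + D" using bB[of y] bD[of y] by linarith
      from sq[OF this] u4[of y] show ?thesis by (simp add: K_def)
    qed
    have K2: "(u1 y - u0' y) ^ 2 + u0 y ^ 4 / 2 \<le> K" for y
    proof -
      have "\<bar>u1 y - u0' y\<bar> \<le> B + D" using bB[of y] bD[of y] by linarith
      from sq[OF this] u4[of y] show ?thesis by (simp add: K_def)
    qed
    fix t x :: real
    assume t1: "1 \<le> t"
    show "\<bar>u t x\<bar> \<le> (5 * K + 2) * t powr (1/3)"
      by (rule pointwise[OF d0 c0' c1 mild t1 K0 K1 K2])
  qed
qed

end
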